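(* Let $V\in\mathcal{C}^{\infty}(\mathbb{R}^d\setminus\{0\})$ be real-valued and let $K_V=p\cdot\partial_q-\partial_qV(q)\cdot\partial_p+\frac12(-\Delta_p+p^2)$ on $\mathbb{R}^{2d}_{q,p}$. For a locally finite smooth partition of unity $\sum_{j\ge-1}\chi_j^2(q)=1$ on $\mathbb{R}^d$, one has \[ \|K_{V}u\|^2_{L^2(\mathbb{R}^{2d})}=\sum_{j\ge-1}\Big(\|K_{V}(\chi_ju)\|^2_{L^2(\mathbb{R}^{2d})}-\|(p\cdot\partial_q\chi_j)u\|^2_{L^2(\mathbb{R}^{2d})}\Big) \] for all $u\in\mathcal{C}_0^{\infty}(\mathbb{R}^{2d})$. In particular, when the cutoffs $\chi_j$ form a dyadic partition as described below, there exists a constant $c>0$ (independent of $V$) such that \[ (1+4c)\|K_{V}u\|^2_{L^2(\mathbb{R}^{2d})}+c\|u\|^2_{L^2(\mathbb{R}^{2d})}\ge\sum_{j\ge-1}\|K_{V}(\chi_ju)\|^2_{L^2(\mathbb{R}^{2d})} \] for all $u\in\mathcal{C}_0^{\infty}(\mathbb{R}^{2d})$.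
   Context: The dyadic partition: smooth functions $\chi_j:\mathbb{R}^d\to[0,1]$, $j\ge-1$, with $\sum_{j\ge-1}\chi_j^2=1$, where $\chi_{-1}$ is supported in a fixed ball around $0$ and, for $j\ge0$, $\chi_j(q)=\tilde\chi(2^{-j}|q|)$ (for $j$ large; in general $\chi_j$ is of the form $\tilde\chi_j(2^{-j}|q|)$ with finitely many fixed profiles) supported in the shell $\{2^j\tfrac34\le|q|\le 2^j\tfrac83\}$, with $\tilde\chi\in\mathcal{C}_0^\infty(]\tfrac34,\tfrac83[)$ fixed; thus $|\partial_q\chi_j|\le C2^{-j}$ uniformly and each point lies in the support of boundedly many $\chi_j$. *)

theory Defs
  imports "HOL-Analysis.Analysis"
begin

definition dderiv :: "('a::real_normed_vector \<Rightarrow> 'b::real_normed_vector) \<Rightarrow> 'a \<Rightarrow> 'a \<Rightarrow> 'b" where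
  "dderiv f v = (\<lambda>x. frechet_derivative f (at x) v)"

definition smooth_on :: "'a::real_normed_vector set \<Rightarrow> ('a \<Rightarrow> 'b::real_normed_vector) \<Rightarrow> bool" where
  "smooth_on S f \<longleftrightarrow> open S \<and>
     (\<forall>vs. \<forall>x\<in>S. (foldr (\<lambda>v g. dderiv g v) vs f) differentiable (at x))"

definition test_fun :: "((real^'n) \<times> (real^'n) \<Rightarrow> complex) \<Rightarrow> bool" where
  "test_fun u \<longleftrightarrow> smooth_on UNIV u \<and> (\<exists>R. \<forall>z. norm z > R \<longrightarrow> u z = 0)"

definition dq :: "'n::finite \<Rightarrow> ((real^'n) \<times> (real^'n) \<Rightarrow> complex) \<Rightarrow> (real^'n) \<times> (real^'n) \<Rightarrow> complex" where
  "dq i u = dderiv u (axis i 1, 0)"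
definition dp :: "'n::finite \<Rightarrow> ((real^'n) \<times> (real^'n) \<Rightarrow> complex) \<Rightarrow> (real^'n) \<times> (real^'n) \<Rightarrow> complex" where
  "dp i u = dderiv u (0, axis i 1)"

definition KV :: "(real^'n::finite \<Rightarrow> real) \<Rightarrow> ((real^'n) \<times> (real^'n) \<Rightarrow> complex) \<Rightarrow> (real^'n) \<times> (real^'n) \<Rightarrow> complex" where
  "KV V u = (\<lambda>(q,p).
      (\<Sum>i\<in>UNIV. complex_of_real (p$i) * dq i u (q,p))
    - (\<Sum>i\<in>UNIV. complex_of_real (dderiv V (axis i 1) q) * dp i u (q,p))
    + (1/2) * ( - (\<Sum>i\<in>UNIV. dp i (dp i u) (q,p)) + complex_of_real ((norm p)^2) * u (q,p)))"

definition L2sq :: "((real^'n::finite) \<times> (real^'n) \<Rightarrow> complex) \<Rightarrow> ennreal" where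
  "L2sq f = (\<integral>\<^sup>+ z. ennreal ((cmod (f z))^2) \<partial>lborel)"

definition cutmul :: "(real^'n::finite \<Rightarrow> real) \<Rightarrow> ((real^'n) \<times> (real^'n) \<Rightarrow> complex) \<Rightarrow> (real^'n) \<times> (real^'n) \<Rightarrow> complex" where
  "cutmul chi u = (\<lambda>(q,p). complex_of_real (chi q) * u (q,p))"

definition comm_term :: "(real^'n::finite \<Rightarrow> real) \<Rightarrow> ((real^'n) \<times> (real^'n) \<Rightarrow> complex) \<Rightarrow> (real^'n) \<times> (real^'n) \<Rightarrow> complex" where
  "comm_term chi u = (\<lambda>(q,p). complex_of_real (\<Sum>i\<in>UNIV. p$i * dderiv chi (axis i 1) q) * u (q,p))"

definition sq_partition :: "(int \<Rightarrow> real^'n::finite \<Rightarrow> real) \<Rightarrow> bool" where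
  "sq_partition chi \<longleftrightarrow>
     (\<forall>j\<ge>-1. smooth_on UNIV (chi j)) \<and>
     (\<forall>q. \<exists>U. open U \<and> q \<in> U \<and> finite {j. j \<ge> -1 \<and> (\<exists>x\<in>U. chi j x \<noteq> 0)}) \<and>
     (\<forall>q. ((\<lambda>j. (chi j q)^2) has_sum 1) {-1..})"

definition dyadic_partition :: "(int \<Rightarrow> real^'n::finite \<Rightarrow> real) \<Rightarrow> bool" where
  "dyadic_partition chi \<longleftrightarrow>
     sq_partition chi \<and>
     (\<forall>j\<ge>-1. \<forall>q. 0 \<le> chi j q \<and> chi j q \<le> 1) \<and>
     (\<exists>R. \<forall>q. norm q > R \<longrightarrow> chi (-1) q = 0) \<and>
     (\<exists>P::(real \<Rightarrow> real) set. finite P \<and>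
        (\<forall>\<phi>\<in>P. smooth_on UNIV \<phi> \<and>
            (\<exists>a b. 3/4 < a \<and> b < 8/3 \<and> (\<forall>t. t \<notin> {a..b} \<longrightarrow> \<phi> t = 0))) \<and>
        (\<forall>j\<ge>0. \<exists>\<phi>\<in>P. \<forall>q. chi j q = \<phi> (2 powr (- real_of_int j) * norm q)))"

end

theory Submission
  imports Defs
begin
lemma smooth_on_dd: "smooth_on S f \<Longrightarrow> smooth_on S (dderiv f v)"
  unfolding smooth_on_def
proof safe
  fix vs x assume "\<forall>vs. \<forall>x\<in>S. foldr (\<lambda>v g. dderiv g v) vs f differentiable at x" "x \<in> S"
  then have "foldr (\<lambda>v g. dderiv g v) (vs @ [v]) f differentiable at x" by blast
  then show "foldr (\<lambda>v g. dderiv g v) vs (dderiv f v) differentiable at x" by simp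
qed

lemma smooth_on_diff: "smooth_on S f \<Longrightarrow> x \<in> S \<Longrightarrow> f differentiable (at x)"
  unfolding smooth_on_def by (metis foldr_Nil id_apply)

lemma diff_has_fd: "f differentiable (at x) \<Longrightarrow> (f has_derivative frechet_derivative f (at x)) (at x)"
  using frechet_derivative_works by blast

lemma dderiv_lin: "f differentiable (at x) \<Longrightarrow> linear (\<lambda>v. dderiv f v x)"
  unfolding dderiv_def using diff_has_fd has_derivative_linear by blast

lemma dderiv_at: "(f has_derivative f') (at x) \<Longrightarrow> dderiv f v x = f' v"
  unfolding dderiv_def using frechet_derivative_at by metis

lemma loc_zero_fd:
  assumes "open U" "x \<in> U" "\<And>y. y \<in> U \<Longrightarrow> f y = 0"
  shows "(f has_derivative (\<lambda>h. 0)) (at x)"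
proof -
  have "((\<lambda>y. 0) has_derivative (\<lambda>h. 0)) (at x)" by simp
  then show ?thesis
    by (rule has_derivative_transform_within_open[OF _ assms(1,2)]) (use assms(3) in auto)
qed

lemma loc_zero_dd:
  assumes "open U" "x \<in> U" "\<And>y. y \<in> U \<Longrightarrow> f y = 0"
  shows "dderiv f v x = 0"
  using dderiv_at[OF loc_zero_fd[OF assms]] .

lemma cutmul_eq: "cutmul chi g = (\<lambda>z. complex_of_real (chi (fst z)) * g z)"
  by (auto simp: cutmul_def fun_eq_iff split: prod.splits)

lemma has_derivative_cutmul:
  assumes "chi differentiable (at (fst z))" "g differentiable (at z)"
  shows "(cutmul chi g has_derivative (\<lambda>h. complex_of_real (chi (fst z)) * frechet_derivative g (at z) h
           + complex_of_real (frechet_derivative chi (at (fst z)) (fst h)) * g z)) (at z)"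
proof -
  have c: "(chi has_derivative frechet_derivative chi (at (fst z))) (at (fst z))"
    using assms(1) diff_has_fd by blast
  have "((\<lambda>z. chi (fst z)) has_derivative (\<lambda>h. frechet_derivative chi (at (fst z)) (fst h))) (at z)"
    using has_derivative_compose[OF has_derivative_fst[OF has_derivative_ident] c] by simp
  then have "((\<lambda>z. complex_of_real (chi (fst z))) has_derivative (\<lambda>h. complex_of_real (frechet_derivative chi (at (fst z)) (fst h)))) (at z)"
    by (rule has_derivative_of_real)
  from has_derivative_mult[OF this diff_has_fd[OF assms(2)]]
  show ?thesis unfolding cutmul_eq by simp
qed

lemma dderiv_cutmul:
  assumes "chi differentiable (at (fst z))" "g differentiable (at z)"
  shows "dderiv (cutmul chi g) v z = complex_of_real (chi (fst z)) * dderiv g v z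
           + complex_of_real (dderiv chi (fst v) (fst z)) * g z"
  using dderiv_at[OF has_derivative_cutmul[OF assms]] by (simp add: dderiv_def)

lemma dp_cutmul:
  fixes chi :: "real^'n::finite \<Rightarrow> real"
  assumes "\<forall>q. chi differentiable (at q)" "\<forall>z. g differentiable (at z)"
  shows "dp i (cutmul chi g) = cutmul chi (dp i g)"
proof (rule ext)
  fix z :: "(real^'n) \<times> (real^'n)"
  have "linear (\<lambda>v. dderiv chi v (fst z))" using dderiv_lin assms(1) by blast
  then have "dderiv chi 0 (fst z) = 0" using linear_0 by blast
  then show "dp i (cutmul chi g) z = cutmul chi (dp i g) z"
    unfolding dp_def using dderiv_cutmul[of chi z g "(0, axis i 1)"] assms
    by (simp add: cutmul_eq)
qed

lemma dq_cutmul: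
  assumes "\<forall>q. chi differentiable (at q)" "\<forall>z. g differentiable (at z)"
  shows "dq i (cutmul chi g) z = complex_of_real (chi (fst z)) * dq i g z
           + complex_of_real (dderiv chi (axis i 1) (fst z)) * g z"
  unfolding dq_def using dderiv_cutmul[of chi z g "(axis i 1, 0)"] assms by simp

lemma KV_eq: "KV V u z =
      (\<Sum>i\<in>UNIV. complex_of_real (snd z$i) * dq i u z)
    - (\<Sum>i\<in>UNIV. complex_of_real (dderiv V (axis i 1) (fst z)) * dp i u z)
    + (1/2) * ( - (\<Sum>i\<in>UNIV. dp i (dp i u) z) + complex_of_real ((norm (snd z))^2) * u z)"
  by (simp add: KV_def split: prod.splits)

lemma lin_sum_axis:
  fixes L :: "real^'n::finite \<Rightarrow> real"
  assumes "linear L" shows "L p = (\<Sum>i\<in>UNIV. p$i * L (axis i 1))"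
proof -
  have "L p = L (\<Sum>i\<in>UNIV. p$i *\<^sub>R axis i 1)"
    using basis_expansion[of p] by (simp add: scalar_mult_eq_scaleR)
  also have "\<dots> = (\<Sum>i\<in>UNIV. p$i * L (axis i 1))"
    using assms by (simp add: linear_sum linear_scale)
  finally show ?thesis .
qed

lemma comm_term_eq:
  assumes "chi differentiable (at (fst z))"
  shows "comm_term chi u z = complex_of_real (dderiv chi (snd z) (fst z)) * u z"
  using lin_sum_axis[OF dderiv_lin[OF assms], of "snd z"]
  by (simp add: comm_term_def split: prod.splits)

lemma KV_cutmul:
  fixes chi :: "real^'n::finite \<Rightarrow> real"
  assumes "\<forall>q. chi differentiable (at q)" "smooth_on UNIV u"
  shows "KV V (cutmul chi u) z = complex_of_real (chi (fst z)) * KV V u z + comm_term chi u z"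
proof -
  have du: "\<forall>z. u differentiable (at z)" using smooth_on_diff assms(2) by blast
  have ddu: "\<forall>z. dp i u differentiable (at z)" for i
    using smooth_on_diff[OF smooth_on_dd[OF assms(2)]] unfolding dp_def by blast
  have e1: "dp i (cutmul chi u) = cutmul chi (dp i u)" for i using dp_cutmul assms(1) du by blast
  have e2: "dp i (cutmul chi (dp i u)) = cutmul chi (dp i (dp i u))" for i
    using dp_cutmul assms(1) ddu by blast
  have ct: "comm_term chi u z = complex_of_real (\<Sum>i\<in>UNIV. snd z$i * dderiv chi (axis i 1) (fst z)) * u z"
    by (simp add: comm_term_def split: prod.splits)
  show ?thesis
    unfolding KV_eq e1 e2 ct dq_cutmul[OF assms(1) du]
    by (simp add: cutmul_eq algebra_simps sum_distrib_left sum.distrib sum_distrib_right)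
qed

lemma cmod_comb:
  "(cmod (complex_of_real x * K + complex_of_real a * U))^2
     = x^2 * (cmod K)^2 + a^2 * (cmod U)^2 + 2*x*a*Re (cnj K * U)"
  unfolding cmod_power2 by (simp add: power2_eq_square algebra_simps)

lemma sq_partition_loc:
  fixes chi :: "int \<Rightarrow> real^'n::finite \<Rightarrow> real"
  assumes sq: "sq_partition chi"
  obtains U F where "open U" "q \<in> U" "finite F" "F \<subseteq> {-1..}"
    "\<And>j x. j \<in> {-1..} - F \<Longrightarrow> x \<in> U \<Longrightarrow> chi j x = 0"
    "\<And>x. x \<in> U \<Longrightarrow> (\<Sum>j\<in>F. (chi j x)^2) = 1"
    "\<And>v. (\<Sum>j\<in>F. chi j q * dderiv (chi j) v q) = 0"
    "\<And>j v. j \<in> {-1..} - F \<Longrightarrow> dderiv (chi j) v q = 0"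
proof -
  from sq obtain U where U: "open U" "q \<in> U" and fin: "finite {j. j \<ge> -1 \<and> (\<exists>x\<in>U. chi j x \<noteq> 0)}"
    unfolding sq_partition_def by blast
  define F where "F = {j. j \<ge> -1 \<and> (\<exists>x\<in>U. chi j x \<noteq> 0)}"
  have FF: "finite F" "F \<subseteq> {-1..}" using fin by (auto simp: F_def)
  have z: "chi j x = 0" if "j \<in> {-1..} - F" "x \<in> U" for j x using that by (auto simp: F_def)
  have s1: "(\<Sum>j\<in>F. (chi j x)^2) = 1" if "x \<in> U" for x
  proof -
    have "((\<lambda>j. (chi j x)^2) has_sum 1) {-1..}" using sq unfolding sq_partition_def by blast
    then have "((\<lambda>j. (chi j x)^2) has_sum 1) F"
      by (subst (asm) has_sum_cong_neutral[where T=F and g="\<lambda>j. (chi j x)^2"]) (use z that FF in auto)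
    moreover have "((\<lambda>j. (chi j x)^2) has_sum (\<Sum>j\<in>F. (chi j x)^2)) F" using FF by simp
    ultimately show ?thesis using has_sum_unique by metis
  qed
  have dz: "dderiv (chi j) v q = 0" if "j \<in> {-1..} - F" for j v
    using loc_zero_dd[OF U] z that by blast
  have diff: "chi j differentiable (at x)" if "j \<in> F" for j x
    using sq FF that smooth_on_diff unfolding sq_partition_def by blast
  have d1: "((\<lambda>x. \<Sum>j\<in>F. chi j x * chi j x) has_derivative
     (\<lambda>h. \<Sum>j\<in>F. chi j q * frechet_derivative (chi j) (at q) h + frechet_derivative (chi j) (at q) h * chi j q)) (at q)"
    by (intro has_derivative_sum has_derivative_mult diff_has_fd diff)
  have "((\<lambda>x. 1::real) has_derivative (\<lambda>h. 0)) (at q)" by simp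
  then have d2: "((\<lambda>x. \<Sum>j\<in>F. chi j x * chi j x) has_derivative (\<lambda>h. 0)) (at q)"
    by (rule has_derivative_transform_within_open[OF _ U]) (use s1 in \<open>auto simp: power2_eq_square\<close>)
  have s2: "(\<Sum>j\<in>F. chi j q * dderiv (chi j) v q) = 0" for v
  proof -
    from has_derivative_unique[OF d1 d2] have
      "(\<Sum>j\<in>F. chi j q * frechet_derivative (chi j) (at q) v + frechet_derivative (chi j) (at q) v * chi j q) = 0"
      by meson
    then have "2 * (\<Sum>j\<in>F. chi j q * dderiv (chi j) v q) = 0"
      by (simp add: dderiv_def sum_distrib_left algebra_simps)
    then show ?thesis by simp
  qed
  show ?thesis using z s1 s2 dz by (rule that[OF U FF])
qed

lemma pw_part1:
  fixes chi :: "int \<Rightarrow> real^'n::finite \<Rightarrow> real"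
  assumes sq: "sq_partition chi" and u: "smooth_on UNIV u"
  shows "ennreal ((cmod (KV V u z))^2) + (\<Sum>\<^sub>\<infinity>j\<in>{-1..}. ennreal ((cmod (comm_term (chi j) u z))^2))
       = (\<Sum>\<^sub>\<infinity>j\<in>{-1..}. ennreal ((cmod (KV V (cutmul (chi j) u) z))^2))"
proof -
  obtain q p where zq: "z = (q,p)" by fastforce
  show ?thesis
  proof (rule sq_partition_loc[where q=q, OF sq])
  fix U F assume U: "open U" "q \<in> U" and FF: "finite F" "F \<subseteq> {-1..}"
    and z: "\<And>j x. j \<in> {-1..} - F \<Longrightarrow> x \<in> U \<Longrightarrow> chi j x = 0"
    and s1: "\<And>x. x \<in> U \<Longrightarrow> (\<Sum>j\<in>F. (chi j x)^2) = 1"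
    and s2: "\<And>v. (\<Sum>j\<in>F. chi j q * dderiv (chi j) v q) = 0"
    and dz: "\<And>j v. j \<in> {-1..} - F \<Longrightarrow> dderiv (chi j) v q = 0"
  have diff: "\<forall>x. chi j differentiable (at x)" if "j \<in> {-1..}" for j
    using sq that smooth_on_diff unfolding sq_partition_def by auto
  define K where "K = KV V u z"
  define a where "a j = dderiv (chi j) p q" for j
  have ct: "comm_term (chi j) u z = complex_of_real (a j) * u z" if "j \<in> {-1..}" for j
    using comm_term_eq[of "chi j" z u] diff[OF that] by (simp add: zq a_def)
  have kc: "KV V (cutmul (chi j) u) z = complex_of_real (chi j q) * K + complex_of_real (a j) * u z"
    if "j \<in> {-1..}" for j
    using KV_cutmul[OF diff[OF that] u, of V z] ct[OF that] by (simp add: K_def zq)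
  have e1: "(\<Sum>\<^sub>\<infinity>j\<in>{-1..}. ennreal ((cmod (comm_term (chi j) u z))^2))
      = (\<Sum>j\<in>F. ennreal ((a j)^2 * (cmod (u z))^2))"
  proof -
    have "(\<Sum>\<^sub>\<infinity>j\<in>{-1..}. ennreal ((cmod (comm_term (chi j) u z))^2))
        = (\<Sum>\<^sub>\<infinity>j\<in>F. ennreal ((a j)^2 * (cmod (u z))^2))"
      by (rule infsum_cong_neutral) (use FF ct dz in \<open>auto simp: a_def norm_mult power_mult_distrib\<close>)
    then show ?thesis using FF by simp
  qed
  have e2: "(\<Sum>\<^sub>\<infinity>j\<in>{-1..}. ennreal ((cmod (KV V (cutmul (chi j) u) z))^2))
      = (\<Sum>j\<in>F. ennreal ((cmod (complex_of_real (chi j q) * K + complex_of_real (a j) * u z))^2))"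
  proof -
    have "(\<Sum>\<^sub>\<infinity>j\<in>{-1..}. ennreal ((cmod (KV V (cutmul (chi j) u) z))^2))
        = (\<Sum>\<^sub>\<infinity>j\<in>F. ennreal ((cmod (complex_of_real (chi j q) * K + complex_of_real (a j) * u z))^2))"
      by (rule infsum_cong_neutral) (use FF kc dz z U in \<open>auto simp: a_def\<close>)
    then show ?thesis using FF by simp
  qed
  have alg: "(\<Sum>j\<in>F. (cmod (complex_of_real (chi j q) * K + complex_of_real (a j) * u z))^2)
     = (cmod K)^2 + (\<Sum>j\<in>F. (a j)^2 * (cmod (u z))^2)"
  proof -
    have "(\<Sum>j\<in>F. (cmod (complex_of_real (chi j q) * K + complex_of_real (a j) * u z))^2)
       = (\<Sum>j\<in>F. (chi j q)^2) * (cmod K)^2 + (\<Sum>j\<in>F. (a j)^2 * (cmod (u z))^2)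
         + 2 * Re (cnj K * u z) * (\<Sum>j\<in>F. chi j q * a j)"
      unfolding cmod_comb by (simp add: sum.distrib sum_distrib_left sum_distrib_right algebra_simps)
    also have "\<dots> = (cmod K)^2 + (\<Sum>j\<in>F. (a j)^2 * (cmod (u z))^2)"
      using s1[OF U(2)] s2[of p] by (simp add: a_def)
    finally show ?thesis .
  qed
  show ?thesis
    unfolding e1 e2 K_def[symmetric]
    using alg by (simp add: sum_nonneg)
qed
qed

lemma diff_cont_on: "(\<And>x. x \<in> S \<Longrightarrow> f differentiable (at x)) \<Longrightarrow> continuous_on S f"
  by (meson continuous_at_imp_continuous_on differentiable_imp_continuous_within)

lemma smooth_cont: "smooth_on S f \<Longrightarrow> continuous_on S f"
  by (rule diff_cont_on) (use smooth_on_diff in blast)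

lemma smooth_cont_dd: "smooth_on S f \<Longrightarrow> continuous_on S (dderiv f v)"
  using smooth_cont smooth_on_dd by blast

lemma meas_off_point:
  fixes g :: "'a::euclidean_space \<Rightarrow> 'b::euclidean_space"
  assumes "continuous_on (UNIV - {a}) g"
  shows "g \<in> borel_measurable borel"
proof -
  have e: "g = (\<lambda>x. indicator (UNIV - {a}) x *\<^sub>R g x + indicator {a} x *\<^sub>R g a)"
    by (auto simp: fun_eq_iff indicator_def)
  have "(\<lambda>x. indicator (UNIV - {a}) x *\<^sub>R g x) \<in> borel_measurable borel"
    by (rule borel_measurable_continuous_on_indicator) (use assms in auto)
  moreover have "(\<lambda>x. indicator {a} x *\<^sub>R g a) \<in> borel_measurable borel"
    by measurable
  ultimately have "(\<lambda>x. indicator (UNIV - {a}) x *\<^sub>R g x + indicator {a} x *\<^sub>R g a) \<in> borel_measurable borel"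
    by (rule borel_measurable_add)
  then show ?thesis using e by simp
qed

lemma meas_cont: "continuous_on UNIV f \<Longrightarrow> f \<in> borel_measurable lborel"
  by (simp add: borel_measurable_continuous_onI)

lemma meas_fst:
  fixes g :: "'a::euclidean_space \<Rightarrow> 'c::euclidean_space"
  assumes "g \<in> borel_measurable borel"
  shows "(\<lambda>z::'a\<times>'b::euclidean_space. g (fst z)) \<in> borel_measurable lborel"
  unfolding measurable_lborel2
  by (rule measurable_compose[OF borel_measurable_continuous_onI[OF continuous_on_fst[OF continuous_on_id]] assms])

lemma V_meas:
  fixes V :: "real^'n::finite \<Rightarrow> real"
  assumes "smooth_on (UNIV - {0}) V"
  shows "(\<lambda>z::(real^'n)\<times>(real^'n). dderiv V v (fst z)) \<in> borel_measurable lborel"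
  by (rule meas_fst, rule meas_off_point) (use smooth_cont_dd[OF assms] in blast)

lemma KV_meas:
  fixes V :: "real^'n::finite \<Rightarrow> real"
  assumes V: "smooth_on (UNIV - {0}) V" and u: "smooth_on UNIV u"
  shows "KV V u \<in> borel_measurable lborel"
proof -
  have [measurable]: "(\<lambda>z::(real^'n)\<times>(real^'n). dderiv V (axis i 1) (fst z)) \<in> borel_measurable lborel" for i
    by (rule V_meas[OF V])
  have [measurable]: "dq i u \<in> borel_measurable lborel" for i
    unfolding dq_def by (rule meas_cont, rule smooth_cont_dd[OF u])
  have [measurable]: "dp i u \<in> borel_measurable lborel" for i
    unfolding dp_def by (rule meas_cont, rule smooth_cont_dd[OF u])
  have [measurable]: "dp i (dp i u) \<in> borel_measurable lborel" for i
    unfolding dp_def by (rule meas_cont, rule smooth_cont_dd[OF smooth_on_dd[OF u]])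
  have [measurable]: "u \<in> borel_measurable lborel"
    by (rule meas_cont, rule smooth_cont[OF u])
  have [measurable]: "(\<lambda>z::(real^'n)\<times>(real^'n). snd z $ i) \<in> borel_measurable lborel" for i
    by (rule meas_cont) (intro continuous_intros)
  have [measurable]: "(\<lambda>z::(real^'n)\<times>(real^'n). norm (snd z)) \<in> borel_measurable lborel"
    by (rule meas_cont) (intro continuous_intros)
  show ?thesis unfolding KV_eq[abs_def] by measurable
qed

lemma comm_meas:
  fixes chi :: "real^'n::finite \<Rightarrow> real"
  assumes c: "smooth_on UNIV chi" and u: "smooth_on UNIV u"
  shows "comm_term chi u \<in> borel_measurable lborel"
proof -
  have e: "comm_term chi u = (\<lambda>z. complex_of_real (\<Sum>i\<in>UNIV. snd z$i * dderiv chi (axis i 1) (fst z)) * u z)"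
    by (simp add: comm_term_def fun_eq_iff split: prod.splits)
  have [measurable]: "(\<lambda>z::(real^'n)\<times>(real^'n). dderiv chi (axis i 1) (fst z)) \<in> borel_measurable lborel" for i
    by (rule meas_fst, rule borel_measurable_continuous_onI, rule smooth_cont_dd[OF c])
  have [measurable]: "u \<in> borel_measurable lborel"
    by (rule meas_cont, rule smooth_cont[OF u])
  have [measurable]: "(\<lambda>z::(real^'n)\<times>(real^'n). snd z $ i) \<in> borel_measurable lborel" for i
    by (rule meas_cont) (intro continuous_intros)
  show ?thesis unfolding e by measurable
qed

lemma KVcut_meas:
  fixes V :: "real^'n::finite \<Rightarrow> real"
  assumes V: "smooth_on (UNIV - {0}) V" and u: "smooth_on UNIV u" and c: "smooth_on UNIV chi"
  shows "KV V (cutmul chi u) \<in> borel_measurable lborel"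
proof -
  have e: "KV V (cutmul chi u) = (\<lambda>z. complex_of_real (chi (fst z)) * KV V u z + comm_term chi u z)"
    using KV_cutmul[OF _ u] smooth_on_diff[OF c] by auto
  have [measurable]: "(\<lambda>z::(real^'n)\<times>(real^'n). chi (fst z)) \<in> borel_measurable lborel"
    by (rule meas_fst, rule borel_measurable_continuous_onI, rule smooth_cont[OF c])
  have [measurable]: "KV V u \<in> borel_measurable lborel" using KV_meas[OF V u] .
  have [measurable]: "comm_term chi u \<in> borel_measurable lborel" using comm_meas[OF c u] .
  show ?thesis unfolding e by measurable
qed

lemma infsum_int_nat: "(\<Sum>\<^sub>\<infinity>j\<in>{-1::int..}. (f j::ennreal)) = (\<Sum>n. f (int n - 1))"
proof -
  have "j \<in> (\<lambda>n. int n - 1) ` UNIV" if "j \<ge> -1" for j::int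
    using that by (intro image_eqI[where x="nat (j+1)"]) auto
  then have im: "{-1::int..} = (\<lambda>n. int n - 1) ` UNIV" by auto
  have inj: "inj_on (\<lambda>n. int n - 1) UNIV" by (auto simp: inj_on_def)
  have "(\<Sum>\<^sub>\<infinity>j\<in>{-1::int..}. f j) = (\<Sum>\<^sub>\<infinity>n\<in>UNIV. f (int n - 1))"
    unfolding im by (subst infsum_reindex[OF inj]) (simp add: o_def)
  also have "\<dots> = (\<Sum>n. f (int n - 1))"
  proof -
    have "((\<lambda>n. f (int n - 1)) has_sum (\<Sum>\<^sub>\<infinity>n\<in>UNIV. f (int n - 1))) UNIV" by (rule has_sum_infsum, rule nonneg_summable_on_complete) simp
    then have "(\<lambda>n. f (int n - 1)) sums (\<Sum>\<^sub>\<infinity>n\<in>UNIV. f (int n - 1))" by (rule has_sum_imp_sums)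
    then show ?thesis by (simp add: sums_iff)
  qed
  finally show ?thesis .
qed

lemma nn_integral_infsum_int:
  assumes "\<And>j. f j \<in> borel_measurable M"
  shows "(\<integral>\<^sup>+ x. (\<Sum>\<^sub>\<infinity>j\<in>{-1::int..}. f j x) \<partial>M) = (\<Sum>\<^sub>\<infinity>j\<in>{-1::int..}. integral\<^sup>N M (f j))"
  unfolding infsum_int_nat by (rule nn_integral_suminf) (use assms in auto)

lemma meas_infsum_int:
  assumes "\<And>j. f j \<in> borel_measurable M"
  shows "(\<lambda>x. (\<Sum>\<^sub>\<infinity>j\<in>{-1::int..}. (f j x :: ennreal))) \<in> borel_measurable M"
  unfolding infsum_int_nat using assms by measurable

lemma sqmeas: assumes "f \<in> borel_measurable lborel"
  shows "(\<lambda>z. ennreal ((cmod (f z))^2)) \<in> borel_measurable lborel"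
proof -
  have [measurable]: "f \<in> borel_measurable borel" using assms by simp
  show ?thesis unfolding measurable_lborel2 by measurable
qed

lemma part1:
  fixes V :: "real^'n::finite \<Rightarrow> real" and chi :: "int \<Rightarrow> real^'n \<Rightarrow> real"
  assumes V: "smooth_on (UNIV - {0}) V" and sq: "sq_partition chi" and u: "test_fun u"
  shows "L2sq (KV V u) + (\<Sum>\<^sub>\<infinity>j\<in>{-1..}. L2sq (comm_term (chi j) u))
          = (\<Sum>\<^sub>\<infinity>j\<in>{-1..}. L2sq (KV V (cutmul (chi j) u)))"
proof -
  have us: "smooth_on UNIV u" using u unfolding test_fun_def by blast
  have cs: "smooth_on UNIV (chi j)" if "j \<in> {-1..}" for j using sq that unfolding sq_partition_def by auto
  define c' where "c' j = (if j \<in> {-1..} then chi j else (\<lambda>_. 0))" for j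
  have cs': "smooth_on UNIV (c' j)" for j
  proof (cases "j \<in> {-1..}")
    case True then show ?thesis using cs by (simp add: c'_def)
  next
    case False
    have "foldr (\<lambda>v g. dderiv g v) vs (\<lambda>_::real^'n. 0::real) = (\<lambda>_. 0)" for vs
      by (induction vs) (auto simp: fun_eq_iff intro: loc_zero_dd[OF open_UNIV UNIV_I])
    then show ?thesis using False by (simp add: c'_def smooth_on_def)
  qed
  have m1: "(\<lambda>z. ennreal ((cmod (comm_term (c' j) u z))^2)) \<in> borel_measurable lborel" for j
    by (rule sqmeas, rule comm_meas[OF cs' us])
  have m2: "(\<lambda>z. ennreal ((cmod (KV V (cutmul (c' j) u) z))^2)) \<in> borel_measurable lborel" for j
    by (rule sqmeas, rule KVcut_meas[OF V us cs'])
  have m0: "(\<lambda>z. ennreal ((cmod (KV V u z))^2)) \<in> borel_measurable lborel"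
    by (rule sqmeas, rule KV_meas[OF V us])
  have r1: "(\<Sum>\<^sub>\<infinity>j\<in>{-1..}. L2sq (comm_term (chi j) u)) = (\<Sum>\<^sub>\<infinity>j\<in>{-1..}. L2sq (comm_term (c' j) u))"
    by (rule infsum_cong) (simp add: c'_def)
  have r2: "(\<Sum>\<^sub>\<infinity>j\<in>{-1..}. L2sq (KV V (cutmul (chi j) u))) = (\<Sum>\<^sub>\<infinity>j\<in>{-1..}. L2sq (KV V (cutmul (c' j) u)))"
    by (rule infsum_cong) (simp add: c'_def)
  have pw: "ennreal ((cmod (KV V u z))^2) + (\<Sum>\<^sub>\<infinity>j\<in>{-1..}. ennreal ((cmod (comm_term (c' j) u z))^2))
       = (\<Sum>\<^sub>\<infinity>j\<in>{-1..}. ennreal ((cmod (KV V (cutmul (c' j) u) z))^2))" for z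
  proof -
    have a: "(\<Sum>\<^sub>\<infinity>j\<in>{-1..}. ennreal ((cmod (comm_term (c' j) u z))^2)) = (\<Sum>\<^sub>\<infinity>j\<in>{-1..}. ennreal ((cmod (comm_term (chi j) u z))^2))"
      by (rule infsum_cong) (simp add: c'_def)
    have b: "(\<Sum>\<^sub>\<infinity>j\<in>{-1..}. ennreal ((cmod (KV V (cutmul (c' j) u) z))^2)) = (\<Sum>\<^sub>\<infinity>j\<in>{-1..}. ennreal ((cmod (KV V (cutmul (chi j) u) z))^2))"
      by (rule infsum_cong) (simp add: c'_def)
    show ?thesis unfolding a b by (rule pw_part1[OF sq us])
  qed
  show ?thesis
    unfolding r1 r2 unfolding L2sq_def
    apply (subst nn_integral_infsum_int[symmetric, OF m1])
    apply (subst nn_integral_infsum_int[symmetric, OF m2])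
    apply (subst nn_integral_add[symmetric, OF m0 meas_infsum_int[OF m1]])
    apply (simp only: pw)
    done
qed

lemma int_bdd:
  fixes g :: "'a::euclidean_space \<Rightarrow> real"
  assumes "g \<in> borel_measurable lborel" "\<And>z. \<bar>g z\<bar> \<le> K * indicator (cball 0 B) z"
  shows "integrable lborel g"
proof -
  have I: "integrable lborel (\<lambda>x. indicator (cball (0::'a) B) x *\<^sub>R K)"
    by (rule borel_integrable_compact) auto
  show ?thesis
  proof (rule Bochner_Integration.integrable_bound[OF I assms(1)])
    have "norm (g x) \<le> norm (indicator (cball (0::'a) B) x *\<^sub>R K)" for x
      using assms(2)[of x] by (cases "x \<in> cball 0 B") auto
    then show "AE x in lborel. norm (g x) \<le> norm (indicator (cball (0::'a) B) x *\<^sub>R K)" by simp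
  qed
qed

lemma cont_bdd:
  fixes g :: "'a::euclidean_space \<Rightarrow> real"
  assumes "continuous_on UNIV g" "\<And>z. norm z > R \<Longrightarrow> g z = 0"
  obtains M where "M \<ge> 0" "\<And>z. \<bar>g z\<bar> \<le> M"
proof -
  have "bounded (g ` cball 0 R)"
    by (rule compact_imp_bounded, rule compact_continuous_image)
       (use assms(1) continuous_on_subset in auto)
  then obtain M where M': "\<forall>x\<in>cball 0 R. \<bar>g x\<bar> \<le> M"
    unfolding bounded_iff by (metis image_eqI real_norm_def)
  have M: "\<bar>g x\<bar> \<le> M" if "x \<in> cball 0 R" for x using M' that by blast
  show ?thesis
  proof (rule that[of "max M 0"])
    fix z show "\<bar>g z\<bar> \<le> max M 0"
      using M[of z] assms(2)[of z] by (cases "norm z \<le> R") auto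
  qed auto
qed

lemma diff_quot_bound:
  fixes f :: "'a::euclidean_space \<Rightarrow> real"
  assumes fd: "\<And>z. f differentiable (at z)" and M: "\<And>z. \<bar>dderiv f e z\<bar> \<le> M" and t: "t > 0"
  shows "\<bar>f (z + t *\<^sub>R e) - f z\<bar> \<le> M * t"
proof -
  define \<phi> where "\<phi> s = f (z + s *\<^sub>R e)" for s
  have der: "(\<phi> has_derivative (\<lambda>s. frechet_derivative f (at (z + x *\<^sub>R e)) (s *\<^sub>R e))) (at x)" for x
  proof -
    have "((\<lambda>s. z + s *\<^sub>R e) has_derivative (\<lambda>s. s *\<^sub>R e)) (at x)"
      by (auto intro!: derivative_eq_intros)
    from has_derivative_compose[OF this diff_has_fd[OF fd]] show ?thesis
      unfolding \<phi>_def by simp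
  qed
  have cont: "continuous_on {0..t} \<phi>"
    unfolding \<phi>_def
    by (intro continuous_on_compose2[OF diff_cont_on[OF fd, of UNIV]]) (auto intro!: continuous_intros)
  obtain \<xi> where "0 < \<xi>" "\<xi> < t" "\<phi> t - \<phi> 0 = frechet_derivative f (at (z + \<xi> *\<^sub>R e)) ((t - 0) *\<^sub>R e)"
    by (rule mvt[OF t cont der])
  moreover have "frechet_derivative f (at (z + \<xi> *\<^sub>R e)) (t *\<^sub>R e) = t * dderiv f e (z + \<xi> *\<^sub>R e)"
    using dderiv_lin[OF fd, of "z + \<xi> *\<^sub>R e"] unfolding dderiv_def
    by (simp add: linear_scale)
  ultimately have "f (z + t *\<^sub>R e) - f z = t * dderiv f e (z + \<xi> *\<^sub>R e)"
    by (simp add: \<phi>_def)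
  then show ?thesis using M[of "z + \<xi> *\<^sub>R e"] t
    by (simp add: abs_mult mult.commute mult_left_mono)
qed

lemma translate_integral:
  fixes g :: "'a::euclidean_space \<Rightarrow> real"
  assumes "g \<in> borel_measurable borel"
  shows "(\<integral>z. g (c + z) \<partial>lborel) = (\<integral>z. g z \<partial>lborel)"
proof -
  have "(\<integral>z. g z \<partial>lborel) = (\<integral>z. g z \<partial>(distr lborel borel ((+) c)))"
    by (simp add: lborel_distr_plus)
  also have "\<dots> = (\<integral>z. g (c + z) \<partial>lborel)"
    by (rule integral_distr) (use assms in auto)
  finally show ?thesis by simp
qed

lemma KL:
  fixes f :: "'a::euclidean_space \<Rightarrow> real" and h :: "'a \<Rightarrow> real" and e :: 'a
  assumes fd: "\<And>z. f differentiable (at z)"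
    and cD: "continuous_on UNIV (dderiv f e)"
    and supp: "\<And>z. norm z > R \<Longrightarrow> f z = 0"
    and hm: "h \<in> borel_measurable lborel"
    and hb: "\<And>B. \<exists>C. \<forall>z. norm z \<le> B \<longrightarrow> \<bar>h z\<bar> \<le> C"
    and hinv: "\<And>z t. h (z + t *\<^sub>R e) = h z"
  shows "integrable lborel (\<lambda>z. h z * dderiv f e z) \<and> (\<integral>z. h z * dderiv f e z \<partial>lborel) = 0"
proof -
  define R0 where "R0 = max R 0"
  have supp0: "f z = 0" if "norm z > R0" for z using supp that by (auto simp: R0_def)
  have D0: "dderiv f e z = 0" if "norm z > R0" for z
    by (rule loc_zero_dd[of "{z. norm z > R0}"]) (use that supp0 in \<open>auto intro: open_Collect_less continuous_intros\<close>)
  obtain M where M0: "M \<ge> 0" and M: "\<And>z. \<bar>dderiv f e z\<bar> \<le> M"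
    using cont_bdd[OF cD D0] by blast
  have cf: "continuous_on UNIV f" using diff_cont_on fd by blast
  obtain Mf where Mf0: "Mf \<ge> 0" and Mf: "\<And>z. \<bar>f z\<bar> \<le> Mf"
    using cont_bdd[OF cf supp0] by blast
  define B where "B = R0 + norm e"
  obtain C where C: "\<And>z. norm z \<le> B \<Longrightarrow> \<bar>h z\<bar> \<le> C" using hb by blast
  have C0: "C \<ge> 0" using C[of 0] by (auto simp: B_def R0_def)
  define t where "t n = 1 / real (Suc n)" for n
  have t0: "t n > 0" "t n \<le> 1" for n by (auto simp: t_def field_simps)
  define Q where "Q n z = h z * ((f (z + t n *\<^sub>R e) - f z) / t n)" for n z
  have hm': "h \<in> borel_measurable borel" using hm by simp
  have [measurable]: "f \<in> borel_measurable borel" using cf by (rule borel_measurable_continuous_onI)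
  have fsh[measurable]: "(\<lambda>z. f (z + c *\<^sub>R e)) \<in> borel_measurable borel" for c
    by (rule borel_measurable_continuous_onI) (auto intro!: continuous_on_compose2[OF cf] continuous_intros)
  have Dm[measurable]: "dderiv f e \<in> borel_measurable borel" using cD by (rule borel_measurable_continuous_onI)
  have Qm: "Q n \<in> borel_measurable lborel" for n
    unfolding Q_def using hm' by simp
  have Qz: "Q n z = 0" if "norm z > B" for n z
  proof -
    have "norm (z + t n *\<^sub>R e) \<ge> norm z - t n * norm e"
      using norm_triangle_ineq2[of z "- (t n *\<^sub>R e)"] t0[of n] by simp
    moreover have "t n * norm e \<le> norm e" using t0[of n] by (simp add: mult_left_le_one_le)
    ultimately have "norm (z + t n *\<^sub>R e) > R0" using that by (simp add: B_def)
    then show ?thesis using supp0[of z] supp0[of "z + t n *\<^sub>R e"] that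
      by (simp add: Q_def B_def) (smt (verit) norm_ge_zero)
  qed
  have Qb: "\<bar>Q n z\<bar> \<le> (C * M) * indicator (cball 0 B) z" for n z
  proof (cases "norm z \<le> B")
    case True
    have "\<bar>(f (z + t n *\<^sub>R e) - f z) / t n\<bar> \<le> M"
      using diff_quot_bound[OF fd M t0(1)] t0(1)[of n] by (simp add: divide_le_eq abs_divide)
    then have "\<bar>Q n z\<bar> \<le> C * M"
      unfolding Q_def abs_mult using C[OF True] by (intro mult_mono) auto
    then show ?thesis using True by simp
  next
    case False then show ?thesis using Qz by simp
  qed
  have lim: "(\<lambda>n. Q n z) \<longlonglongrightarrow> h z * dderiv f e z" for z
  proof -
    have "((\<lambda>s. f (z + s *\<^sub>R e)) has_derivative (\<lambda>s. frechet_derivative f (at (z + 0 *\<^sub>R e)) (s *\<^sub>R e))) (at 0)"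
    proof -
      have "((\<lambda>s. z + s *\<^sub>R e) has_derivative (\<lambda>s. s *\<^sub>R e)) (at 0)"
        by (auto intro!: derivative_eq_intros)
      from has_derivative_compose[OF this diff_has_fd[OF fd]] show ?thesis by simp
    qed
    moreover have "(\<lambda>s. frechet_derivative f (at (z + 0 *\<^sub>R e)) (s *\<^sub>R e)) = (\<lambda>s. dderiv f e z * s)"
      using dderiv_lin[OF fd, of z] unfolding dderiv_def by (simp add: linear_scale fun_eq_iff)
    ultimately have "((\<lambda>s. f (z + s *\<^sub>R e)) has_field_derivative dderiv f e z) (at 0)"
      by (simp add: has_field_derivative_def)
    then have dq: "((\<lambda>s. (f (z + s *\<^sub>R e) - f z) / s) \<longlongrightarrow> dderiv f e z) (at 0)"
      unfolding has_field_derivative_iff by simp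
    have "filterlim t (at_right 0) sequentially"
    proof (rule tendsto_imp_filterlim_at_right)
      show "t \<longlonglongrightarrow> 0" unfolding t_def using LIMSEQ_Suc[OF lim_inverse_n] by (simp add: inverse_eq_divide)
      show "\<forall>\<^sub>F n in sequentially. 0 < t n" using t0 by simp
    qed
    then have tl: "filterlim t (at 0) sequentially"
      by (rule filterlim_mono[OF _ at_within_le_at order_refl])
    have "(\<lambda>n. (f (z + t n *\<^sub>R e) - f z) / t n) \<longlonglongrightarrow> dderiv f e z"
      using filterlim_compose[OF dq tl] by simp
    then show ?thesis unfolding Q_def by (intro tendsto_mult tendsto_const)
  qed
  have wint: "integrable lborel (\<lambda>z. (C * M) * indicator (cball (0::'a) B) z)"
    apply (rule int_bdd[where K="C*M" and B=B])
     apply (simp, measurable)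
    using C0 M0 by (auto simp: indicator_def)
  have limm: "(\<lambda>z. h z * dderiv f e z) \<in> borel_measurable lborel" using hm' by simp
  have int_lim: "integrable lborel (\<lambda>z. h z * dderiv f e z)"
    by (rule integrable_dominated_convergence[where s=Q, OF limm Qm wint]) (use lim Qb in auto)
  have conv: "(\<lambda>n. integral\<^sup>L lborel (Q n)) \<longlonglongrightarrow> (\<integral>z. h z * dderiv f e z \<partial>lborel)"
    by (rule integral_dominated_convergence[where s=Q, OF limm Qm wint]) (use lim Qb in auto)
  have hf_int: "integrable lborel (\<lambda>z. h z * f (z + c *\<^sub>R e))" if "\<bar>c\<bar> \<le> 1" for c
  proof (rule int_bdd[where K="C*Mf" and B=B])
    show "(\<lambda>z. h z * f (z + c *\<^sub>R e)) \<in> borel_measurable lborel" using hm' by simp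
    fix z
    show "\<bar>h z * f (z + c *\<^sub>R e)\<bar> \<le> C * Mf * indicator (cball 0 B) z"
    proof (cases "norm z \<le> B")
      case True then show ?thesis using C[OF True] Mf[of "z + c *\<^sub>R e"]
        by (simp add: abs_mult mult_mono C0 Mf0)
    next
      case False
      have "norm (z + c *\<^sub>R e) \<ge> norm z - \<bar>c\<bar> * norm e"
        using norm_triangle_ineq2[of z "- (c *\<^sub>R e)"] by simp
      moreover have "\<bar>c\<bar> * norm e \<le> norm e" using that by (simp add: mult_left_le_one_le)
      ultimately have "norm (z + c *\<^sub>R e) > R0" using False by (simp add: B_def)
      then show ?thesis using supp0 False by simp
    qed
  qed
  have Q0: "integral\<^sup>L lborel (Q n) = 0" for n
  proof -
    have e1: "(\<integral>z. h z * f (z + t n *\<^sub>R e) \<partial>lborel) = (\<integral>z. h z * f z \<partial>lborel)"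
    proof -
      have "(\<integral>z. h z * f (z + t n *\<^sub>R e) \<partial>lborel) = (\<integral>z. (\<lambda>y. h y * f y) (t n *\<^sub>R e + z) \<partial>lborel)"
        using hinv by (simp add: add.commute)
      also have "\<dots> = (\<integral>z. h z * f z \<partial>lborel)"
        by (rule translate_integral) (use hm' in simp)
      finally show ?thesis .
    qed
    have i1: "integrable lborel (\<lambda>z. h z * f (z + t n *\<^sub>R e))" using hf_int t0[of n] by simp
    have i0: "integrable lborel (\<lambda>z. h z * f z)" using hf_int[of 0] by simp
    have "integral\<^sup>L lborel (Q n) = (\<integral>z. (h z * f (z + t n *\<^sub>R e) - h z * f z) / t n \<partial>lborel)"
      unfolding Q_def by (simp add: algebra_simps diff_divide_distrib)
    also have "\<dots> = ((\<integral>z. h z * f (z + t n *\<^sub>R e) \<partial>lborel) - (\<integral>z. h z * f z \<partial>lborel)) / t n"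
      using i1 i0 by simp
    also have "\<dots> = 0" using e1 by simp
    finally show ?thesis .
  qed
  have "(\<integral>z. h z * dderiv f e z \<partial>lborel) = 0"
    using conv unfolding Q0 by (simp add: LIMSEQ_const_iff)
  with int_lim show ?thesis by blast
qed

lemma Re_ofreal_mult: "Re (complex_of_real r * w) = r * Re w" by simp
lemma Re_cnj_self: "Re (cnj w * w) = (cmod w)^2" unfolding cmod_power2 by (simp add: power2_eq_square)
lemma Re_cnj_comm: "Re (cnj a * b) = Re (cnj b * a)" by simp

lemma Re_cnj_has_derivative:
  assumes "f differentiable (at z)" "g differentiable (at z)"
  shows "((\<lambda>z. Re (cnj (f z) * g z)) has_derivative
          (\<lambda>h. Re (cnj (f z) * frechet_derivative g (at z) h + cnj (frechet_derivative f (at z) h) * g z))) (at z)"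
proof -
  have "((\<lambda>z. cnj (f z) * g z) has_derivative
          (\<lambda>h. cnj (f z) * frechet_derivative g (at z) h + cnj (frechet_derivative f (at z) h) * g z)) (at z)"
    by (rule has_derivative_mult[OF has_derivative_cnj[OF diff_has_fd[OF assms(1)]] diff_has_fd[OF assms(2)]])
  then show ?thesis by (rule bounded_linear.has_derivative[OF bounded_linear_Re])
qed

lemma Re_cnj_dderiv:
  assumes "f differentiable (at z)" "g differentiable (at z)"
  shows "dderiv (\<lambda>z. Re (cnj (f z) * g z)) e z = Re (cnj (f z) * dderiv g e z) + Re (cnj (g z) * dderiv f e z)"
  using dderiv_at[OF Re_cnj_has_derivative[OF assms], of e] by (simp add: dderiv_def)

lemma Re_cnj_diff:
  assumes "\<And>z. f differentiable (at z)" "\<And>z. g differentiable (at z)"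
  shows "(\<lambda>z. Re (cnj (f z) * g z)) differentiable (at z)"
  using Re_cnj_has_derivative[OF assms] differentiable_def by blast

lemma int_cont_supp:
  fixes g :: "'a::euclidean_space \<Rightarrow> real"
  assumes "continuous_on UNIV g" "\<And>z. norm z > R \<Longrightarrow> g z = 0"
  shows "integrable lborel g"
proof -
  obtain M where M: "M \<ge> 0" "\<And>z. \<bar>g z\<bar> \<le> M" using cont_bdd[OF assms] by blast
  show ?thesis
  proof (rule int_bdd[where K=M and B=R])
    show "g \<in> borel_measurable lborel" using assms(1) by (rule meas_cont)
    fix z show "\<bar>g z\<bar> \<le> M * indicator (cball 0 R) z"
      using M assms(2)[of z] by (cases "norm z \<le> R") auto
  qed
qed

lemma test_supp:
  fixes u :: "(real^'n::finite)\<times>(real^'n) \<Rightarrow> complex"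
  assumes "test_fun u"
  obtains R where "\<And>z. norm z > R \<Longrightarrow> u z = 0"
    "\<And>z v. norm z > R \<Longrightarrow> dderiv u v z = 0"
    "\<And>z v w. norm z > R \<Longrightarrow> dderiv (dderiv u v) w z = 0"
proof -
  obtain R where R: "\<And>z. norm z > R \<Longrightarrow> u z = 0" using assms unfolding test_fun_def by blast
  have o: "open {z::(real^'n)\<times>(real^'n). norm z > R}" for R by (auto intro: open_Collect_less continuous_intros)
  have d1: "dderiv u v z = 0" if "norm z > R" for z v
    by (rule loc_zero_dd[OF o]) (use that R in auto)
  have d2: "dderiv (dderiv u v) w z = 0" if "norm z > R" for z v w
    by (rule loc_zero_dd[OF o]) (use that d1 in blast)+
  show ?thesis using that R d1 d2 by blast
qed

lemma sum2: "(\<Sum>n\<in>A. f n * (2 * g n)) = 2 * (\<Sum>n\<in>A. f n * (g n::real))"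
  by (simp add: sum_distrib_left mult_ac)

lemma p_bound:
  fixes V :: "real^'n::finite \<Rightarrow> real" and u :: "(real^'n)\<times>(real^'n) \<Rightarrow> complex"
  assumes V: "smooth_on (UNIV - {0}) V" and u: "test_fun u"
  shows "(\<integral>\<^sup>+z. ennreal ((norm (snd z))^2 * (cmod (u z))^2) \<partial>lborel) \<le> L2sq (KV V u) + L2sq u"
proof (cases "L2sq (KV V u) = \<infinity>")
  case True then show ?thesis by simp
next
  case False
  have us: "smooth_on UNIV u" using u unfolding test_fun_def by blast
  obtain R where R0: "\<And>z. norm z > R \<Longrightarrow> u z = 0"
    and R1: "\<And>z v. norm z > R \<Longrightarrow> dderiv u v z = 0"
    and R2: "\<And>z v w. norm z > R \<Longrightarrow> dderiv (dderiv u v) w z = 0"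
    using test_supp[OF u] by metis
  have du: "\<And>z. u differentiable (at z)" using smooth_on_diff[OF us] by blast
  have ddu: "\<And>z. dderiv u v differentiable (at z)" for v using smooth_on_diff[OF smooth_on_dd[OF us]] by blast
  have cu: "continuous_on UNIV u" using smooth_cont[OF us] .
  have cdu: "continuous_on UNIV (dderiv u v)" for v using smooth_cont_dd[OF us] .
  have cddu: "continuous_on UNIV (dderiv (dderiv u v) w)" for v w using smooth_cont_dd[OF smooth_on_dd[OF us]] .
  define eq :: "'n \<Rightarrow> (real^'n)\<times>(real^'n)" where "eq i = (axis i 1, 0)" for i
  define ep :: "'n \<Rightarrow> (real^'n)\<times>(real^'n)" where "ep i = (0, axis i 1)" for i
  define g where "g i q = dderiv V (axis i 1) q" for i q
  define F where "F z = Re (cnj (u z) * u z)" for z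
  define wi where "wi i z = Re (cnj (u z) * dp i u z)" for i z
  have Fd: "\<And>z. F differentiable (at z)" unfolding F_def by (rule Re_cnj_diff[OF du du])
  have wd: "\<And>z. wi i differentiable (at z)" for i unfolding wi_def dp_def by (rule Re_cnj_diff[OF du ddu])
  have DF: "dderiv F e z = 2 * Re (cnj (u z) * dderiv u e z)" for e z
    unfolding F_def using Re_cnj_dderiv[OF du du] by simp
  have Dw: "dderiv (wi i) (ep i) z = Re (cnj (u z) * dp i (dp i u) z) + (cmod (dp i u z))^2" for i z
  proof -
    have "dderiv (wi i) (ep i) z = Re (cnj (u z) * dderiv (dderiv u (0, axis i 1)) (ep i) z)
       + Re (cnj (dderiv u (0, axis i 1) z) * dderiv u (ep i) z)"
      unfolding wi_def dp_def by (rule Re_cnj_dderiv[OF du ddu])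
    then show ?thesis unfolding dp_def ep_def Re_cnj_self .
  qed
  have DFq: "dderiv F (eq i) z = 2 * Re (cnj (u z) * dq i u z)" for i z by (simp add: DF dq_def eq_def)
  have DFp: "dderiv F (ep i) z = 2 * Re (cnj (u z) * dp i u z)" for i z by (simp add: DF dp_def ep_def)
  have cDF: "continuous_on UNIV (dderiv F e)" for e
    unfolding DF[abs_def] using cu cdu by (intro continuous_intros) auto
  have cDw: "continuous_on UNIV (dderiv (wi i) (ep i))" for i
    unfolding Dw[abs_def] dp_def using cu cdu cddu by (intro continuous_intros) auto
  have Fs: "F z = 0" if "norm z > R" for z using R0[OF that] by (simp add: F_def)
  have ws: "wi i z = 0" if "norm z > R" for i z using R0[OF that] by (simp add: wi_def)
  have KT: "integrable lborel (\<lambda>z. snd z $ i * dderiv F (eq i) z) \<and> (\<integral>z. snd z $ i * dderiv F (eq i) z \<partial>lborel) = 0" for i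
  proof (rule KL[OF Fd cDF Fs])
    show "(\<lambda>z::(real^'n)\<times>(real^'n). snd z $ i) \<in> borel_measurable lborel"
      by (rule meas_cont) (intro continuous_intros)
    show "\<exists>C. \<forall>z::(real^'n)\<times>(real^'n). norm z \<le> B \<longrightarrow> \<bar>snd z $ i\<bar> \<le> C" for B
      by (rule exI[of _ B]) (metis component_le_norm_cart norm_snd_le order_trans prod.collapse)
    show "snd (z + t *\<^sub>R eq i) $ i = snd z $ i" for z t by (simp add: eq_def)
  qed
  have KW: "integrable lborel (\<lambda>z. 1 * dderiv (wi i) (ep i) z) \<and> (\<integral>z. 1 * dderiv (wi i) (ep i) z \<partial>lborel) = 0" for i
    by (rule KL[OF wd cDw ws]) auto
  define S where "S n = {q::real^'n. 1 / real (Suc n) \<le> norm q} \<union> {0}" for n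
  have Sb: "S n \<in> sets borel" for n
    unfolding S_def by (intro borel_closed closed_Un closed_Collect_le) (auto intro: continuous_intros)
  have gm: "g i \<in> borel_measurable borel" for i
    unfolding g_def by (rule meas_off_point) (use smooth_cont_dd[OF V] in blast)
  have gc: "continuous_on (UNIV - {0}) (g i)" for i unfolding g_def using smooth_cont_dd[OF V] by blast
  define hV where "hV n i z = indicator (S n) (fst z) * g i (fst z)" for n i and z :: "(real^'n)\<times>(real^'n)"
  have KV: "integrable lborel (\<lambda>z. hV n i z * dderiv F (ep i) z) \<and> (\<integral>z. hV n i z * dderiv F (ep i) z \<partial>lborel) = 0" for n i
  proof (rule KL[OF Fd cDF Fs])
    show "hV n i \<in> borel_measurable lborel"
      unfolding hV_def[abs_def]
      by (rule meas_fst[where g="\<lambda>q. indicator (S n) q * g i q"]) (use gm Sb in measurable)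
    show "\<exists>C. \<forall>z. norm z \<le> B \<longrightarrow> \<bar>hV n i z\<bar> \<le> C" for B
    proof -
      let ?K = "{q::real^'n. 1 / real (Suc n) \<le> norm q} \<inter> cball 0 B"
      have cK: "compact ?K" by (intro closed_Int_compact closed_Collect_le) (auto intro: continuous_intros)
      have "?K \<subseteq> UNIV - {0}" by auto
      then have "continuous_on ?K (g i)" using gc continuous_on_subset by blast
      then have "bounded (g i ` ?K)" using cK compact_continuous_image compact_imp_bounded by blast
      then obtain C1 where C1: "\<forall>x\<in>?K. \<bar>g i x\<bar> \<le> C1"
        unfolding bounded_iff by (metis image_eqI real_norm_def)
      show ?thesis
      proof (rule exI[of _ "max C1 \<bar>g i 0\<bar>"], intro allI impI)
        fix z :: "(real^'n)\<times>(real^'n)" assume z: "norm z \<le> B"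
        have nq: "norm (fst z) \<le> B" using z by (metis norm_fst_le order_trans prod.collapse)
        show "\<bar>hV n i z\<bar> \<le> max C1 \<bar>g i 0\<bar>"
        proof (cases "fst z \<in> S n")
          case True
          show ?thesis
          proof (cases "fst z = 0")
            case True then show ?thesis by (simp add: hV_def S_def)
          next
            case False
            then have "fst z \<in> ?K" using \<open>fst z \<in> S n\<close> nq by (auto simp: S_def)
            then have "\<bar>g i (fst z)\<bar> \<le> C1" using C1 by blast
            then show ?thesis using \<open>fst z \<in> S n\<close> by (simp add: hV_def)
          qed
        next
          case False then show ?thesis by (simp add: hV_def)
        qed
      qed
    qed
    show "hV n i (z + t *\<^sub>R ep i) = hV n i z" for z t by (simp add: hV_def ep_def)
  qed
  define X where "X z = 2 * Re (cnj (u z) * KV V u z)" for z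
  define W where "W z = (\<Sum>i\<in>UNIV. g i (fst z) * dderiv F (ep i) z)" for z
  define T where "T z = (\<Sum>i\<in>UNIV. snd z $ i * dderiv F (eq i) z)" for z
  define Lw where "Lw z = (\<Sum>i\<in>UNIV. 1 * dderiv (wi i) (ep i) z)" for z
  define A where "A z = (\<Sum>i\<in>UNIV. (cmod (dp i u z))^2)" for z
  define P where "P z = (norm (snd z))^2 * (cmod (u z))^2" for z :: "(real^'n)\<times>(real^'n)"
  have ident: "X z + W z = T z + A z - Lw z + P z" for z
    unfolding X_def W_def T_def Lw_def A_def P_def KV_eq DFq DFp Dw g_def cmod_power2
    by (simp add: Re_sum sum_distrib_left ring_distribs sum.distrib sum_subtractf
        algebra_simps power2_eq_square sum_divide_distrib[symmetric])
       (simp only: sum2, simp add: field_simps)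

  have iT: "integrable lborel T" unfolding T_def[abs_def] using KT by (intro Bochner_Integration.integrable_sum) auto
  have iLw: "integrable lborel Lw" unfolding Lw_def[abs_def] using KW by (intro Bochner_Integration.integrable_sum) auto
  have iA: "integrable lborel A"
  proof (rule int_cont_supp[where R=R])
    show "continuous_on UNIV A" unfolding A_def[abs_def] dp_def using cdu by (intro continuous_intros) auto
    show "A z = 0" if "norm z > R" for z using R1[OF that] by (simp add: A_def dp_def)
  qed
  have iP: "integrable lborel P"
  proof (rule int_cont_supp[where R=R])
    show "continuous_on UNIV P" unfolding P_def[abs_def] using cu by (intro continuous_intros) auto
    show "P z = 0" if "norm z > R" for z using R0[OF that] by (simp add: P_def)
  qed
  have iu2: "integrable lborel (\<lambda>z. (cmod (u z))^2)"
  proof (rule int_cont_supp[where R=R])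
    show "continuous_on UNIV (\<lambda>z. (cmod (u z))^2)" using cu by (intro continuous_intros) auto
    show "(cmod (u z))^2 = 0" if "norm z > R" for z using R0[OF that] by simp
  qed
  have Km: "KV V u \<in> borel_measurable lborel" by (rule KV_meas[OF V us])
  have um: "u \<in> borel_measurable lborel" by (rule meas_cont[OF cu])
  have iK2: "integrable lborel (\<lambda>z. (cmod (KV V u z))^2)"
  proof (subst integrable_iff_bounded, intro conjI)
    show "(\<lambda>z. (cmod (KV V u z))^2) \<in> borel_measurable lborel" using Km by measurable
    show "(\<integral>\<^sup>+ z. ennreal (norm ((cmod (KV V u z))^2)) \<partial>lborel) < \<infinity>"
      using False by (simp add: L2sq_def top.not_eq_extremum)
  qed
  have Xm: "X \<in> borel_measurable lborel"
  proof -
    have [measurable]: "KV V u \<in> borel_measurable borel" "u \<in> borel_measurable borel" using Km um by simp_all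
    have "X = (\<lambda>z. 2 * (Re (u z) * Re (KV V u z) + Im (u z) * Im (KV V u z)))"
      by (simp add: X_def fun_eq_iff)
    then show ?thesis by simp
  qed
  have Xb: "\<bar>X z\<bar> \<le> (cmod (KV V u z))^2 + (cmod (u z))^2" for z
  proof -
    have "\<bar>Re (cnj (u z) * KV V u z)\<bar> \<le> cmod (u z) * cmod (KV V u z)"
      using abs_Re_le_cmod[of "cnj (u z) * KV V u z"] by (simp add: norm_mult)
    moreover have "2 * (cmod (u z) * cmod (KV V u z)) \<le> (cmod (KV V u z))^2 + (cmod (u z))^2"
      using sum_squares_bound[of "cmod (u z)" "cmod (KV V u z)"] by (simp add: algebra_simps power2_eq_square)
    ultimately show ?thesis unfolding X_def by linarith
  qed
  have iX: "integrable lborel X"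
  proof (rule Bochner_Integration.integrable_bound[OF Bochner_Integration.integrable_add[OF iK2 iu2] Xm])
    show "AE x in lborel. norm (X x) \<le> norm ((cmod (KV V u x))^2 + (cmod (u x))^2)"
      using Xb by simp
  qed
  have Weq: "W = (\<lambda>z. T z + A z - Lw z + P z - X z)" using ident by (auto simp: fun_eq_iff algebra_simps)
  have iW: "integrable lborel W" unfolding Weq using iT iA iLw iP iX by auto
  have W0: "integral\<^sup>L lborel W = 0"
  proof -
    define s where "s n z = indicator (S n) (fst z) * W z" for n z
    have s0: "integral\<^sup>L lborel (s n) = 0" for n
    proof -
      have "s n = (\<lambda>z. \<Sum>i\<in>UNIV. hV n i z * dderiv F (ep i) z)"
        by (simp add: s_def W_def hV_def fun_eq_iff sum_distrib_left mult.assoc)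
      then have "integral\<^sup>L lborel (s n) = (\<Sum>i\<in>UNIV. \<integral>z. hV n i z * dderiv F (ep i) z \<partial>lborel)"
        using KV by (simp add: Bochner_Integration.integral_sum)
      also have "\<dots> = 0" using KV by simp
      finally show ?thesis .
    qed
    have Wm: "W \<in> borel_measurable lborel" using iW by (rule borel_measurable_integrable)
    have sm: "s n \<in> borel_measurable lborel" for n
    proof -
      have "(\<lambda>z::(real^'n)\<times>(real^'n). indicator (S n) (fst z) :: real) \<in> borel_measurable lborel"
        by (rule meas_fst) (use Sb in measurable)
      then show ?thesis unfolding s_def[abs_def] using Wm by measurable
    qed
    have lim: "(\<lambda>n. s n z) \<longlonglongrightarrow> W z" for z
    proof (rule tendsto_eventually)
      have "\<forall>\<^sub>F n in sequentially. fst z \<in> S n"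
      proof (cases "fst z = 0")
        case True then show ?thesis by (simp add: S_def)
      next
        case False
        then obtain N where N: "inverse (real (Suc N)) < norm (fst z)"
          using reals_Archimedean[of "norm (fst z)"] by auto
        show ?thesis unfolding eventually_sequentially
        proof (intro exI allI impI)
          fix n assume "N \<le> n"
          then have "1 / real (Suc n) \<le> inverse (real (Suc N))"
            by (simp add: inverse_eq_divide frac_le)
          then show "fst z \<in> S n" using N by (simp add: S_def)
        qed
      qed
      then show "\<forall>\<^sub>F n in sequentially. s n z = W z" by eventually_elim (simp add: s_def)
    qed
    have "(\<lambda>n. integral\<^sup>L lborel (s n)) \<longlonglongrightarrow> integral\<^sup>L lborel W"
    proof (rule integral_dominated_convergence[where w="\<lambda>z. \<bar>W z\<bar>", OF Wm sm])
      show "integrable lborel (\<lambda>z. \<bar>W z\<bar>)" using iW by simp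
      show "AE x in lborel. (\<lambda>n. s n x) \<longlonglongrightarrow> W x" using lim by simp
      show "AE x in lborel. norm (s n x) \<le> \<bar>W x\<bar>" for n by (simp add: s_def indicator_def)
    qed
    then show ?thesis unfolding s0 by (simp add: LIMSEQ_const_iff)
  qed
  have intX: "integral\<^sup>L lborel X = integral\<^sup>L lborel A + integral\<^sup>L lborel P"
  proof -
    have "X = (\<lambda>z. T z + A z - Lw z + P z - W z)" using ident by (auto simp: fun_eq_iff algebra_simps)
    then have "integral\<^sup>L lborel X = integral\<^sup>L lborel T + integral\<^sup>L lborel A - integral\<^sup>L lborel Lw
       + integral\<^sup>L lborel P - integral\<^sup>L lborel W"
      using iT iA iLw iP iW by simp
    moreover have "integral\<^sup>L lborel T = 0" unfolding T_def[abs_def] using KT by (simp add: Bochner_Integration.integral_sum)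
    moreover have "integral\<^sup>L lborel Lw = 0" unfolding Lw_def[abs_def] using KW by (simp add: Bochner_Integration.integral_sum)
    ultimately show ?thesis using W0 by simp
  qed
  have A0: "integral\<^sup>L lborel A \<ge> 0" by (rule integral_nonneg_AE) (simp add: A_def sum_nonneg)
  have "integral\<^sup>L lborel X \<le> (\<integral>z. (cmod (KV V u z))^2 + (cmod (u z))^2 \<partial>lborel)"
    by (rule Bochner_Integration.integral_mono[OF iX Bochner_Integration.integrable_add[OF iK2 iu2]]) (use Xb in \<open>auto simp: abs_le_iff\<close>)
  also have "\<dots> = (\<integral>z. (cmod (KV V u z))^2 \<partial>lborel) + (\<integral>z. (cmod (u z))^2 \<partial>lborel)"
    using iK2 iu2 by simp
  finally have main: "integral\<^sup>L lborel P \<le> (\<integral>z. (cmod (KV V u z))^2 \<partial>lborel) + (\<integral>z. (cmod (u z))^2 \<partial>lborel)"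
    using intX A0 by linarith
  have e1: "(\<integral>\<^sup>+z. ennreal ((norm (snd z))^2 * (cmod (u z))^2) \<partial>lborel) = ennreal (integral\<^sup>L lborel P)"
    unfolding P_def[symmetric] by (rule nn_integral_eq_integral[OF iP]) (simp add: P_def)
  have e2: "L2sq (KV V u) = ennreal (\<integral>z. (cmod (KV V u z))^2 \<partial>lborel)"
    unfolding L2sq_def by (rule nn_integral_eq_integral[OF iK2]) simp
  have e3: "L2sq u = ennreal (\<integral>z. (cmod (u z))^2 \<partial>lborel)"
    unfolding L2sq_def by (rule nn_integral_eq_integral[OF iu2]) simp
  show ?thesis unfolding e1 e2 e3
    using main by (simp add: ennreal_plus[symmetric] integral_nonneg_AE ennreal_leI del: ennreal_plus)
qed

lemma real_fd: "frechet_derivative (\<phi>::real\<Rightarrow>real) (at t) h = h * dderiv \<phi> 1 t"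
  if "\<phi> differentiable (at t)"
proof -
  have "linear (frechet_derivative \<phi> (at t))" using dderiv_lin[OF that] unfolding dderiv_def
    by (simp add: linear_iff)
  then have "frechet_derivative \<phi> (at t) (h *\<^sub>R 1) = h *\<^sub>R frechet_derivative \<phi> (at t) 1"
    by (rule linear_scale)
  then show ?thesis by (simp add: dderiv_def)
qed

lemma profile_bound:
  fixes \<phi> :: "real \<Rightarrow> real"
  assumes s: "smooth_on UNIV \<phi>" and ab: "\<forall>t. t \<notin> {a..b} \<longrightarrow> \<phi> t = 0"
  shows "\<exists>M\<ge>0. \<forall>t. \<bar>dderiv \<phi> 1 t\<bar> \<le> M"
proof -
  have z: "dderiv \<phi> 1 t = 0" if "norm t > max \<bar>a\<bar> \<bar>b\<bar>" for t
  proof (cases "t < a")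
    case True
    show ?thesis by (rule loc_zero_dd[of "{..<a}"]) (use True ab in auto)
  next
    case False
    then have "t > b" using that by auto
    show ?thesis by (rule loc_zero_dd[of "{b<..}"]) (use \<open>t > b\<close> ab in auto)
  qed
  obtain M where "M \<ge> 0" "\<And>t. \<bar>dderiv \<phi> 1 t\<bar> \<le> M"
    using cont_bdd[OF smooth_cont_dd[OF s] z] by blast
  then show ?thesis by blast
qed

lemma profiles_bound:
  fixes P :: "(real \<Rightarrow> real) set"
  assumes "finite P" "\<forall>\<phi>\<in>P. \<exists>M\<ge>0. \<forall>t. \<bar>dderiv \<phi> 1 t\<bar> \<le> M"
  shows "\<exists>M\<ge>0. \<forall>\<phi>\<in>P. \<forall>t. \<bar>dderiv \<phi> 1 t\<bar> \<le> M"
proof -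
  from assms(2) obtain Mf where Mf: "\<forall>\<phi>\<in>P. Mf \<phi> \<ge> 0 \<and> (\<forall>t. \<bar>dderiv \<phi> 1 t\<bar> \<le> Mf \<phi>)"
    by metis
  have "\<forall>\<phi>\<in>P. \<forall>t. \<bar>dderiv \<phi> 1 t\<bar> \<le> (\<Sum>\<psi>\<in>P. Mf \<psi>)"
  proof (intro ballI allI)
    fix \<phi> t assume "\<phi> \<in> P"
    then have "Mf \<phi> \<le> (\<Sum>\<psi>\<in>P. Mf \<psi>)" using assms(1) Mf by (intro member_le_sum) auto
    moreover have "\<bar>dderiv \<phi> 1 t\<bar> \<le> Mf \<phi>" using Mf \<open>\<phi> \<in> P\<close> by blast
    ultimately show "\<bar>dderiv \<phi> 1 t\<bar> \<le> (\<Sum>\<psi>\<in>P. Mf \<psi>)" by linarith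
  qed
  moreover have "(\<Sum>\<psi>\<in>P. Mf \<psi>) \<ge> 0" using Mf by (intro sum_nonneg) auto
  ultimately show ?thesis by blast
qed

lemma radial_grad_bound:
  fixes \<phi> :: "real \<Rightarrow> real" and f :: "real^'n::finite \<Rightarrow> real"
  assumes s: "smooth_on UNIV \<phi>" and a: "a > 0" and ab: "\<forall>t. t < a \<longrightarrow> \<phi> t = 0"
    and M: "\<forall>t. \<bar>dderiv \<phi> 1 t\<bar> \<le> M" and c: "c > 0"
    and f: "\<forall>q. f q = \<phi> (c * norm q)"
  shows "\<bar>dderiv f p q\<bar> \<le> M * c * norm p"
proof (cases "c * norm q < a")
  case True
  have o: "open {x::real^'n. c * norm x < a}" by (intro open_Collect_less continuous_intros)
  have "dderiv f p q = 0"
    by (rule loc_zero_dd[OF o]) (use True ab f in auto)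
  moreover have "0 \<le> M" using M[rule_format, of 0] by linarith
  ultimately show ?thesis using c by simp
next
  case False
  then have q0: "q \<noteq> 0" using a c by auto
  have fe: "f = (\<lambda>x. \<phi> (c * norm x))" using f by auto
  have d1: "((\<lambda>x. c * norm x) has_derivative (\<lambda>h. c * (h \<bullet> sgn q))) (at q)"
    by (rule has_derivative_mult_right[OF has_derivative_norm[OF q0]])
  have d2: "(\<phi> has_derivative frechet_derivative \<phi> (at (c * norm q))) (at (c * norm q))"
    using diff_has_fd smooth_on_diff[OF s] by blast
  have "(f has_derivative (\<lambda>h. frechet_derivative \<phi> (at (c * norm q)) (c * (h \<bullet> sgn q)))) (at q)"
    unfolding fe using has_derivative_compose[OF d1 d2] by simp
  then have "dderiv f p q = frechet_derivative \<phi> (at (c * norm q)) (c * (p \<bullet> sgn q))"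
    by (rule dderiv_at)
  also have "\<dots> = c * (p \<bullet> sgn q) * dderiv \<phi> 1 (c * norm q)"
    using real_fd smooth_on_diff[OF s] by blast
  finally have e: "dderiv f p q = c * (p \<bullet> sgn q) * dderiv \<phi> 1 (c * norm q)" .
  have "\<bar>p \<bullet> sgn q\<bar> \<le> norm p" using Cauchy_Schwarz_ineq2[of p "sgn q"] q0 by (simp add: norm_sgn)
  then have "\<bar>c * (p \<bullet> sgn q) * dderiv \<phi> 1 (c * norm q)\<bar> \<le> c * norm p * M"
    unfolding abs_mult using c M by (intro mult_mono) auto
  then show ?thesis unfolding e by (simp add: mult_ac)
qed

lemma cpt_grad_bound:
  fixes f :: "real^'n::finite \<Rightarrow> real"
  assumes s: "smooth_on UNIV f" and R: "\<forall>q. norm q > R \<longrightarrow> f q = 0"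
  shows "\<exists>M\<ge>0. \<forall>q p. \<bar>dderiv f p q\<bar> \<le> M * norm p"
proof -
  have z: "dderiv f v q = 0" if "norm q > R" for q v
    by (rule loc_zero_dd[of "{x. norm x > R}"]) (use that R in \<open>auto intro: open_Collect_less continuous_intros\<close>)
  have "\<forall>i. \<exists>M\<ge>0. \<forall>q. \<bar>dderiv f (axis i 1) q\<bar> \<le> M"
  proof
    fix i
    obtain M where "M \<ge> 0" "\<And>q. \<bar>dderiv f (axis i 1) q\<bar> \<le> M"
      using cont_bdd[OF smooth_cont_dd[OF s] z] by blast
    then show "\<exists>M\<ge>0. \<forall>q. \<bar>dderiv f (axis i 1) q\<bar> \<le> M" by blast
  qed
  then obtain Mi where Mi: "\<forall>i. Mi i \<ge> 0 \<and> (\<forall>q. \<bar>dderiv f (axis i 1) q\<bar> \<le> Mi i)" by metis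
  have "\<bar>dderiv f p q\<bar> \<le> (\<Sum>i\<in>UNIV. Mi i) * norm p" for p q
  proof -
    have "dderiv f p q = (\<Sum>i\<in>UNIV. p$i * dderiv f (axis i 1) q)"
      by (rule lin_sum_axis[OF dderiv_lin[OF smooth_on_diff[OF s]]]) simp
    then have "\<bar>dderiv f p q\<bar> \<le> (\<Sum>i\<in>UNIV. \<bar>p$i\<bar> * \<bar>dderiv f (axis i 1) q\<bar>)"
      by (simp add: sum_abs[THEN order_trans] abs_mult)
    also have "\<dots> \<le> (\<Sum>i\<in>UNIV. norm p * Mi i)"
      by (intro sum_mono mult_mono) (use Mi component_le_norm_cart in auto)
    finally show ?thesis by (simp add: sum_distrib_left mult.commute)
  qed
  moreover have "(\<Sum>i\<in>UNIV. Mi i) \<ge> 0" using Mi by (simp add: sum_nonneg)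
  ultimately show ?thesis by blast
qed

lemma dyadic_grads:
  fixes chi :: "int \<Rightarrow> real^'n::finite \<Rightarrow> real"
  assumes d: "dyadic_partition chi"
  shows "\<exists>M M1. M \<ge> 0 \<and> M1 \<ge> 0 \<and> (\<forall>q p. \<bar>dderiv (chi (-1)) p q\<bar> \<le> M1 * norm p) \<and>
     (\<forall>j\<ge>0. \<forall>q p. \<bar>dderiv (chi j) p q\<bar> \<le> M * 2 powr (- real_of_int j) * norm p)"
proof -
  have sq: "sq_partition chi" using d unfolding dyadic_partition_def by blast
  have s1: "smooth_on UNIV (chi (-1))" using sq unfolding sq_partition_def by auto
  obtain R where R: "\<forall>q. norm q > R \<longrightarrow> chi (-1) q = 0" using d unfolding dyadic_partition_def by blast
  obtain M1 where M1: "M1 \<ge> 0" "\<forall>q p. \<bar>dderiv (chi (-1)) p q\<bar> \<le> M1 * norm p"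
    using cpt_grad_bound[OF s1 R] by blast
  obtain P :: "(real \<Rightarrow> real) set" where Pf: "finite P"
    and Pp: "\<forall>\<phi>\<in>P. smooth_on UNIV \<phi> \<and> (\<exists>a b. 3/4 < a \<and> b < 8/3 \<and> (\<forall>t. t \<notin> {a..b} \<longrightarrow> \<phi> t = 0))"
    and Pj: "\<forall>j\<ge>0. \<exists>\<phi>\<in>P. \<forall>q. chi j q = \<phi> (2 powr (- real_of_int j) * norm q)"
    using d unfolding dyadic_partition_def by blast
  have "\<forall>\<phi>\<in>P. \<exists>M\<ge>0. \<forall>t. \<bar>dderiv \<phi> 1 t\<bar> \<le> M"
  proof
    fix \<phi> assume "\<phi> \<in> P"
    then obtain a b where "smooth_on UNIV \<phi>" "\<forall>t. t \<notin> {a..b} \<longrightarrow> \<phi> t = 0" using Pp by blast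
    then show "\<exists>M\<ge>0. \<forall>t. \<bar>dderiv \<phi> 1 t\<bar> \<le> M" by (rule profile_bound)
  qed
  then obtain M where M: "M \<ge> 0" "\<forall>\<phi>\<in>P. \<forall>t. \<bar>dderiv \<phi> 1 t\<bar> \<le> M"
    using profiles_bound[OF Pf] by blast
  have "\<forall>j\<ge>0. \<forall>q p. \<bar>dderiv (chi j) p q\<bar> \<le> M * 2 powr (- real_of_int j) * norm p"
  proof (intro allI impI)
    fix j :: int and q p assume "j \<ge> 0"
    then obtain \<phi> where \<phi>: "\<phi> \<in> P" "\<forall>q. chi j q = \<phi> (2 powr (- real_of_int j) * norm q)" using Pj by blast
    then obtain a b where ab: "smooth_on UNIV \<phi>" "3/4 < a" "\<forall>t. t \<notin> {a..b} \<longrightarrow> \<phi> t = 0" using Pp by blast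
    show "\<bar>dderiv (chi j) p q\<bar> \<le> M * 2 powr (- real_of_int j) * norm p"
      by (rule radial_grad_bound[OF ab(1), of a]) (use ab \<phi> M in auto)
  qed
  then show ?thesis using M M1 by blast
qed

lemma geom_bound:
  fixes G :: "int set"
  assumes "finite G" "G \<subseteq> {0..}"
  shows "(\<Sum>j\<in>G. (2 powr (- real_of_int j))^2) \<le> 2"
proof -
  have le: "(2 powr (- real_of_int j))^2 \<le> (1/2)^(nat j)" if "j \<in> G" for j
  proof -
    have j: "real_of_int j = real (nat j)" using that assms(2) by auto
    have e: "2 powr (- real_of_int j) = (1/2)^(nat j)"
      unfolding j powr_minus by (simp add: powr_realpow power_one_over inverse_eq_divide)
    have "((1::real)/2)^(nat j) \<le> 1" by (simp add: power_le_one)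
    then show ?thesis unfolding e by (simp add: power2_eq_square mult_left_le_one_le)
  qed
  have inj: "inj_on nat G" using assms(2) unfolding inj_on_def by (metis atLeast_iff nat_eq_iff2 subsetD)
  obtain N where N: "nat ` G \<subseteq> {..<N}" using finite_nat_bounded[OF finite_imageI[OF assms(1)]] by blast
  have "(\<Sum>j\<in>G. (2 powr (- real_of_int j))^2) \<le> (\<Sum>j\<in>G. ((1::real)/2)^(nat j))"
    using le by (rule sum_mono)
  also have "\<dots> = (\<Sum>k\<in>nat ` G. ((1::real)/2)^k)" by (simp add: sum.reindex[OF inj])
  also have "\<dots> \<le> (\<Sum>k\<in>{..<N}. ((1::real)/2)^k)" by (rule sum_mono2[OF _ N]) auto
  also have "\<dots> = 2 - 2 * (1/2)^N" unfolding sum_gp_strict by (simp add: field_simps)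
  also have "\<dots> \<le> 2" by simp
  finally show ?thesis .
qed

lemma dyadic_sum_bound:
  fixes chi :: "int \<Rightarrow> real^'n::finite \<Rightarrow> real"
  assumes d: "dyadic_partition chi"
  shows "\<exists>C\<ge>0. \<forall>q p F. finite F \<longrightarrow> F \<subseteq> {-1..} \<longrightarrow> (\<Sum>j\<in>F. (dderiv (chi j) p q)^2) \<le> C * (norm p)^2"
proof -
  obtain M M1 where M: "M \<ge> 0" "M1 \<ge> 0" and M1b: "\<forall>q p. \<bar>dderiv (chi (-1)) p q\<bar> \<le> M1 * norm p"
    and Mb: "\<forall>j\<ge>0. \<forall>q p. \<bar>dderiv (chi j) p q\<bar> \<le> M * 2 powr (- real_of_int j) * norm p"
    using dyadic_grads[OF d] by blast
  have "\<forall>q p F. finite F \<longrightarrow> F \<subseteq> {-1..} \<longrightarrow> (\<Sum>j\<in>F. (dderiv (chi j) p q)^2) \<le> (M1^2 + 2 * M^2) * (norm p)^2"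
  proof (intro allI impI)
    fix q p and F :: "int set" assume F: "finite F" "F \<subseteq> {-1..}"
    define G where "G = F \<inter> {0..}"
    have G: "finite G" "G \<subseteq> {0..}" "-1 \<notin> G" using F by (auto simp: G_def)
    have FG: "F \<subseteq> insert (-1) G" using F by (auto simp: G_def)
    have "(\<Sum>j\<in>F. (dderiv (chi j) p q)^2) \<le> (\<Sum>j\<in>insert (-1) G. (dderiv (chi j) p q)^2)"
      by (rule sum_mono2[OF _ FG]) (use G in auto)
    also have "\<dots> = (dderiv (chi (-1)) p q)^2 + (\<Sum>j\<in>G. (dderiv (chi j) p q)^2)"
      using G by simp
    also have "\<dots> \<le> (M1 * norm p)^2 + (\<Sum>j\<in>G. (M * 2 powr (- real_of_int j) * norm p)^2)"
    proof (intro add_mono sum_mono)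
      show "(dderiv (chi (-1)) p q)^2 \<le> (M1 * norm p)^2"
        using M1b M by (metis abs_le_square_iff abs_of_nonneg abs_ge_zero order_trans)
      fix j assume "j \<in> G"
      then have "\<bar>dderiv (chi j) p q\<bar> \<le> M * 2 powr (- real_of_int j) * norm p" using Mb G by auto
      then show "(dderiv (chi j) p q)^2 \<le> (M * 2 powr (- real_of_int j) * norm p)^2"
        by (metis abs_le_square_iff abs_of_nonneg abs_ge_zero order_trans)
    qed
    also have "\<dots> = M1^2 * (norm p)^2 + M^2 * (norm p)^2 * (\<Sum>j\<in>G. (2 powr (- real_of_int j))^2)"
      by (simp add: power_mult_distrib sum_distrib_left mult_ac)
    also have "\<dots> \<le> M1^2 * (norm p)^2 + M^2 * (norm p)^2 * 2"
      using geom_bound[OF G(1,2)] by (intro add_left_mono mult_left_mono) auto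
    finally show "(\<Sum>j\<in>F. (dderiv (chi j) p q)^2) \<le> (M1^2 + 2 * M^2) * (norm p)^2"
      by (simp add: algebra_simps)
  qed
  then show ?thesis using M by (intro exI[of _ "M1^2 + 2 * M^2"]) auto
qed

lemma nn_integral_infsum_int':
  assumes "\<And>j. j \<ge> -1 \<Longrightarrow> f j \<in> borel_measurable M"
  shows "(\<integral>\<^sup>+ x. (\<Sum>\<^sub>\<infinity>j\<in>{-1::int..}. f j x) \<partial>M) = (\<Sum>\<^sub>\<infinity>j\<in>{-1::int..}. integral\<^sup>N M (f j))"
proof -
  define f' where "f' j = (if j \<ge> -1 then f j else (\<lambda>_. 0))" for j
  have m: "f' j \<in> borel_measurable M" for j using assms by (simp add: f'_def)
  have a: "(\<Sum>\<^sub>\<infinity>j\<in>{-1::int..}. f j x) = (\<Sum>\<^sub>\<infinity>j\<in>{-1::int..}. f' j x)" for x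
    by (rule infsum_cong) (simp add: f'_def)
  have b: "(\<Sum>\<^sub>\<infinity>j\<in>{-1::int..}. integral\<^sup>N M (f j)) = (\<Sum>\<^sub>\<infinity>j\<in>{-1::int..}. integral\<^sup>N M (f' j))"
    by (rule infsum_cong) (simp add: f'_def)
  show ?thesis unfolding a b by (rule nn_integral_infsum_int[OF m])
qed

lemma comm_pw:
  fixes chi :: "int \<Rightarrow> real^'n::finite \<Rightarrow> real"
  assumes sq: "sq_partition chi"
    and C: "\<forall>q p F. finite F \<longrightarrow> F \<subseteq> {-1..} \<longrightarrow> (\<Sum>j\<in>F. (dderiv (chi j) p q)^2) \<le> C * (norm p)^2"
  shows "(\<Sum>\<^sub>\<infinity>j\<in>{-1..}. ennreal ((cmod (comm_term (chi j) u z))^2))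
           \<le> ennreal (C * ((norm (snd z))^2 * (cmod (u z))^2))"
proof -
  obtain q p where zq: "z = (q,p)" by fastforce
  show ?thesis
  proof (rule sq_partition_loc[where q=q, OF sq])
    fix U F assume U: "open U" "q \<in> U" and FF: "finite F" "F \<subseteq> {-1..}"
      and dz: "\<And>j v. j \<in> {-1..} - F \<Longrightarrow> dderiv (chi j) v q = 0"
    have diff: "chi j differentiable (at x)" if "j \<in> {-1..}" for j x
      using sq that smooth_on_diff unfolding sq_partition_def by auto
    have ct: "comm_term (chi j) u z = complex_of_real (dderiv (chi j) p q) * u z" if "j \<in> {-1..}" for j
      using comm_term_eq[of "chi j" z u] diff[OF that] by (simp add: zq)
    have "(\<Sum>\<^sub>\<infinity>j\<in>{-1..}. ennreal ((cmod (comm_term (chi j) u z))^2))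
        = (\<Sum>\<^sub>\<infinity>j\<in>F. ennreal ((dderiv (chi j) p q)^2 * (cmod (u z))^2))"
      by (rule infsum_cong_neutral) (use FF ct dz in \<open>auto simp: norm_mult power_mult_distrib\<close>)
    also have "\<dots> = ennreal ((\<Sum>j\<in>F. (dderiv (chi j) p q)^2) * (cmod (u z))^2)"
      using FF by (simp add: sum_distrib_right)
    also have "\<dots> \<le> ennreal (C * (norm p)^2 * (cmod (u z))^2)"
      using C FF by (intro ennreal_leI mult_right_mono) auto
    finally show ?thesis by (simp add: zq mult_ac)
  qed
qed

lemma part2:
  fixes chi :: "int \<Rightarrow> real^'n::finite \<Rightarrow> real"
  assumes d: "dyadic_partition chi"
  shows "\<exists>c::real. c > 0 \<and>
          (\<forall>(V::real^'n \<Rightarrow> real) u. smooth_on (UNIV - {0}) V \<longrightarrow> test_fun u \<longrightarrow>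
             ennreal (1 + 4*c) * L2sq (KV V u) + ennreal c * L2sq u
               \<ge> (\<Sum>\<^sub>\<infinity>j\<in>{-1..}. L2sq (KV V (cutmul (chi j) u))))"
proof -
  have sq: "sq_partition chi" using d unfolding dyadic_partition_def by blast
  obtain C where C0: "C \<ge> 0" and C: "\<forall>q p F. finite F \<longrightarrow> F \<subseteq> {-1..} \<longrightarrow> (\<Sum>j\<in>F. (dderiv (chi j) p q)^2) \<le> C * (norm p)^2"
    using dyadic_sum_bound[OF d] by blast
  define c where "c = C + 1"
  have c0: "c > 0" using C0 by (simp add: c_def)
  have "ennreal (1 + 4*c) * L2sq (KV V u) + ennreal c * L2sq u
               \<ge> (\<Sum>\<^sub>\<infinity>j\<in>{-1..}. L2sq (KV V (cutmul (chi j) u)))"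
    if V: "smooth_on (UNIV - {0}) V" and u: "test_fun u" for V u
  proof -
    have us: "smooth_on UNIV u" using u unfolding test_fun_def by blast
    have cs: "smooth_on UNIV (chi j)" if "j \<ge> -1" for j using sq that unfolding sq_partition_def by auto
    have m: "(\<lambda>z. ennreal ((cmod (comm_term (chi j) u z))^2)) \<in> borel_measurable lborel" if "j \<ge> -1" for j
      by (rule sqmeas, rule comm_meas[OF cs[OF that] us])
    have "(\<Sum>\<^sub>\<infinity>j\<in>{-1..}. L2sq (comm_term (chi j) u))
        = (\<integral>\<^sup>+ z. (\<Sum>\<^sub>\<infinity>j\<in>{-1..}. ennreal ((cmod (comm_term (chi j) u z))^2)) \<partial>lborel)"
      unfolding L2sq_def by (rule nn_integral_infsum_int'[symmetric]) (rule m)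
    also have "\<dots> \<le> (\<integral>\<^sup>+ z. ennreal C * ennreal ((norm (snd z))^2 * (cmod (u z))^2) \<partial>lborel)"
      by (rule nn_integral_mono) (use comm_pw[OF sq C] C0 in \<open>simp add: ennreal_mult\<close>)
    also have "\<dots> = ennreal C * (\<integral>\<^sup>+ z. ennreal ((norm (snd z))^2 * (cmod (u z))^2) \<partial>lborel)"
    proof (rule nn_integral_cmult)
      have r: "(\<lambda>z. (norm (snd z))^2 * (cmod (u z))^2) \<in> borel_measurable borel"
        by (rule borel_measurable_continuous_onI) (use smooth_cont[OF us] in \<open>intro continuous_intros\<close>)
      show "(\<lambda>z. ennreal ((norm (snd z))^2 * (cmod (u z))^2)) \<in> borel_measurable lborel"
        using r by simp
    qed
    also have "\<dots> \<le> ennreal C * (L2sq (KV V u) + L2sq u)"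
      by (rule mult_left_mono[OF p_bound[OF V u]]) simp
    finally have cb: "(\<Sum>\<^sub>\<infinity>j\<in>{-1..}. L2sq (comm_term (chi j) u)) \<le> ennreal C * (L2sq (KV V u) + L2sq u)" .
    have "(\<Sum>\<^sub>\<infinity>j\<in>{-1..}. L2sq (KV V (cutmul (chi j) u)))
        = L2sq (KV V u) + (\<Sum>\<^sub>\<infinity>j\<in>{-1..}. L2sq (comm_term (chi j) u))"
      using part1[OF V sq u] by simp
    also have "\<dots> \<le> L2sq (KV V u) + ennreal C * (L2sq (KV V u) + L2sq u)"
      using cb by (rule add_left_mono)
    also have "\<dots> = (1 + ennreal C) * L2sq (KV V u) + ennreal C * L2sq u"
      by (simp add: distrib_left distrib_right)
    also have "\<dots> \<le> ennreal (1 + 4*c) * L2sq (KV V u) + ennreal c * L2sq u"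
    proof (intro add_mono mult_right_mono)
      have "ennreal (1 + 4*c) = 1 + ennreal (4*c)" using c0 ennreal_plus[of 1 "4*c"] by simp
      moreover have "ennreal C \<le> ennreal (4*c)" using C0 by (intro ennreal_leI) (simp add: c_def)
      ultimately show "1 + ennreal C \<le> ennreal (1 + 4*c)" by (simp add: add_left_mono)
      show "ennreal C \<le> ennreal c" by (intro ennreal_leI) (simp add: c_def)
    qed auto
    finally show ?thesis by simp
  qed
  then show ?thesis using c0 by blast
qed

theorem lemma2p2:
  fixes dummy :: "real^'n::finite"
  shows
   "(\<forall>(V::real^'n \<Rightarrow> real) (chi::int \<Rightarrow> real^'n \<Rightarrow> real) u.
        smooth_on (UNIV - {0}) V \<longrightarrow> sq_partition chi \<longrightarrow> test_fun u \<longrightarrow>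
        L2sq (KV V u) + (\<Sum>\<^sub>\<infinity>j\<in>{-1..}. L2sq (comm_term (chi j) u))
          = (\<Sum>\<^sub>\<infinity>j\<in>{-1..}. L2sq (KV V (cutmul (chi j) u))))
    \<and>
    (\<forall>chi::int \<Rightarrow> real^'n \<Rightarrow> real. dyadic_partition chi \<longrightarrow>
       (\<exists>c::real. c > 0 \<and>
          (\<forall>(V::real^'n \<Rightarrow> real) u. smooth_on (UNIV - {0}) V \<longrightarrow> test_fun u \<longrightarrow>
             ennreal (1 + 4*c) * L2sq (KV V u) + ennreal c * L2sq u
               \<ge> (\<Sum>\<^sub>\<infinity>j\<in>{-1..}. L2sq (KV V (cutmul (chi j) u))))))"
  using part1 part2 by blast

end
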